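(* Let $(V,v)$ be the upper and lower probabilities on $(\Omega,\mathcal{F})$ generated by a nonempty set $\mathcal{P}\subseteq\Delta(\Omega,\mathcal{F})$. The following are equivalent: (i) $V$ is continuous at $\emptyset$; (ii) $V$ is continuous; (iii) $v$ is continuous; (iv) $v$ is continuous at $\Omega$. Moreover, each of (i)–(iv) implies (v): $\mathrm{core}(v)\subseteq\Delta^{\sigma}(\Omega,\mathcal{F})$.
   Context: $\Delta(\Omega,\mathcal{F})$ is the set of finitely additive probabilities on $\mathcal{F}$ and $\Delta^{\sigma}(\Omega,\mathcal{F})$ the set of countably additive probabilities. $V(A)=\sup_{P\in\mathcal{P}}P(A)$, $v(A)=\inf_{P\in\mathcal{P}}P(A)$. A set function $\mu$ is continuous if $\mu(A_n)\to\mu(A)$ whenever $A_n\uparrow A$ or $A_n\downarrow A$; continuous at $\emptyset$ if $\mu(A_n)\to0$ whenever $A_n\downarrow\emptyset$; continuous at $\Omega$ if $\mu(A_n)\to1$ whenever $A_n\uparrow\Omega$. $\mathrm{core}(v)=\{P\in\Delta(\Omega,\mathcal{F}): P\ge v \text{ on } \mathcal{F}\}$. *)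

theory Defs
  imports "HOL-Analysis.Analysis"
begin

definition fa_prob :: "'a set \<Rightarrow> 'a set set \<Rightarrow> ('a set \<Rightarrow> real) \<Rightarrow> bool" where
  "fa_prob \<Omega> F P \<longleftrightarrow> (\<forall>A\<in>F. 0 \<le> P A) \<and> P \<Omega> = 1 \<and>
     (\<forall>A\<in>F. \<forall>B\<in>F. A \<inter> B = {} \<longrightarrow> P (A \<union> B) = P A + P B)"

definition Delta :: "'a set \<Rightarrow> 'a set set \<Rightarrow> ('a set \<Rightarrow> real) set" where
  "Delta \<Omega> F = {P. fa_prob \<Omega> F P}"

definition Delta_sigma :: "'a set \<Rightarrow> 'a set set \<Rightarrow> ('a set \<Rightarrow> real) set" where
  "Delta_sigma \<Omega> F = {P. fa_prob \<Omega> F P \<and>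
     (\<forall>A::nat \<Rightarrow> 'a set. range A \<subseteq> F \<longrightarrow> disjoint_family A \<longrightarrow> (\<Union>n. A n) \<in> F \<longrightarrow>
        (\<lambda>n. P (A n)) sums P (\<Union>n. A n))}"

definition upper_prob :: "('a set \<Rightarrow> real) set \<Rightarrow> 'a set \<Rightarrow> real" where
  "upper_prob \<P> A = (SUP P\<in>\<P>. P A)"

definition lower_prob :: "('a set \<Rightarrow> real) set \<Rightarrow> 'a set \<Rightarrow> real" where
  "lower_prob \<P> A = (INF P\<in>\<P>. P A)"

definition set_fun_continuous :: "'a set set \<Rightarrow> ('a set \<Rightarrow> real) \<Rightarrow> bool" where
  "set_fun_continuous F \<mu> \<longleftrightarrow>
     (\<forall>A (B::nat \<Rightarrow> 'a set). range B \<subseteq> F \<longrightarrow> A \<in> F \<longrightarrow> incseq B \<longrightarrow> (\<Union>n. B n) = A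
        \<longrightarrow> (\<lambda>n. \<mu> (B n)) \<longlonglongrightarrow> \<mu> A) \<and>
     (\<forall>A (B::nat \<Rightarrow> 'a set). range B \<subseteq> F \<longrightarrow> A \<in> F \<longrightarrow> decseq B \<longrightarrow> (\<Inter>n. B n) = A
        \<longrightarrow> (\<lambda>n. \<mu> (B n)) \<longlonglongrightarrow> \<mu> A)"

definition continuous_at_empty :: "'a set set \<Rightarrow> ('a set \<Rightarrow> real) \<Rightarrow> bool" where
  "continuous_at_empty F \<mu> \<longleftrightarrow>
     (\<forall>B::nat \<Rightarrow> 'a set. range B \<subseteq> F \<longrightarrow> decseq B \<longrightarrow> (\<Inter>n. B n) = {}
        \<longrightarrow> (\<lambda>n. \<mu> (B n)) \<longlonglongrightarrow> 0)"

definition continuous_at_Omega :: "'a set \<Rightarrow> 'a set set \<Rightarrow> ('a set \<Rightarrow> real) \<Rightarrow> bool" where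
  "continuous_at_Omega \<Omega> F \<mu> \<longleftrightarrow>
     (\<forall>B::nat \<Rightarrow> 'a set. range B \<subseteq> F \<longrightarrow> incseq B \<longrightarrow> (\<Union>n. B n) = \<Omega>
        \<longrightarrow> (\<lambda>n. \<mu> (B n)) \<longlonglongrightarrow> 1)"

definition core :: "'a set \<Rightarrow> 'a set set \<Rightarrow> ('a set \<Rightarrow> real) \<Rightarrow> ('a set \<Rightarrow> real) set" where
  "core \<Omega> F \<nu> = {P \<in> Delta \<Omega> F. \<forall>A\<in>F. \<nu> A \<le> P A}"

end

theory Submission
  imports Defs
begin

lemma fa_empty:
  assumes "sigma_algebra \<Omega> F" "fa_prob \<Omega> F P" shows "P {} = 0"
proof -
  interpret sigma_algebra \<Omega> F by fact
  have "P ({} \<union> {}) = P {} + P {}" using assms(2) empty_sets unfolding fa_prob_def by blast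
  thus ?thesis by simp
qed

lemma fa_diff:
  assumes "sigma_algebra \<Omega> F" "fa_prob \<Omega> F P" "A \<in> F" "B \<in> F" "A \<subseteq> B"
  shows "P B = P A + P (B - A)"
proof -
  interpret sigma_algebra \<Omega> F by fact
  have "B - A \<in> F" using assms by auto
  hence "P (A \<union> (B - A)) = P A + P (B - A)" using assms(2,3) unfolding fa_prob_def by blast
  moreover have "A \<union> (B - A) = B" using assms(5) by blast
  ultimately show ?thesis by simp
qed

lemma fa_bounds:
  assumes "sigma_algebra \<Omega> F" "fa_prob \<Omega> F P" "A \<in> F"
  shows "0 \<le> P A \<and> P A \<le> 1 \<and> P (\<Omega> - A) = 1 - P A"
proof -
  interpret sigma_algebra \<Omega> F by fact
  have s: "A \<subseteq> \<Omega>" using assms(3) sets_into_space by blast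
  have "P \<Omega> = P A + P (\<Omega> - A)" using fa_diff[OF assms(1,2) assms(3) top s] .
  moreover have "0 \<le> P (\<Omega> - A)" "0 \<le> P A" "P \<Omega> = 1" using assms(2,3) unfolding fa_prob_def by auto
  ultimately show ?thesis by linarith
qed

lemma fa_finite_union:
  fixes A :: "nat \<Rightarrow> 'a set"
  assumes "sigma_algebra \<Omega> F" "fa_prob \<Omega> F P" "range A \<subseteq> F" "disjoint_family A"
  shows "P (\<Union>i<n. A i) = (\<Sum>i<n. P (A i))"
proof (induction n)
  case 0
  then show ?case using fa_empty[OF assms(1,2)] by simp
next
  case (Suc n)
  interpret sigma_algebra \<Omega> F by fact
  have e: "(\<Union>i<Suc n. A i) = (\<Union>i<n. A i) \<union> A n" by (auto simp: lessThan_Suc)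
  have d: "(\<Union>i<n. A i) \<inter> A n = {}" proof -
    have "A i \<inter> A n = {}" if "i < n" for i using assms(4) that unfolding disjoint_family_on_def by simp
    thus ?thesis by blast
  qed
  have m: "(\<Union>i<n. A i) \<in> F" using assms(3) by auto
  have "P ((\<Union>i<n. A i) \<union> A n) = P (\<Union>i<n. A i) + P (A n)"
    using assms(2) m assms(3) d unfolding fa_prob_def by blast
  then show ?case using Suc e by simp
qed

context
  fixes \<Omega> :: "'a set" and F :: "'a set set" and \<P> :: "('a set \<Rightarrow> real) set"
  assumes sa: "sigma_algebra \<Omega> F"
    and ne: "\<P> \<noteq> {}" and sub: "\<P> \<subseteq> Delta \<Omega> F"
begin

lemma fa_of: "P \<in> \<P> \<Longrightarrow> fa_prob \<Omega> F P"
  using sub unfolding Delta_def by auto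

lemma bnds: "P \<in> \<P> \<Longrightarrow> A \<in> F \<Longrightarrow> 0 \<le> P A \<and> P A \<le> 1 \<and> P (\<Omega> - A) = 1 - P A"
  using fa_bounds[OF sa fa_of] by blast

lemma bddA: "A \<in> F \<Longrightarrow> bdd_above ((\<lambda>P. P A) ` \<P>)"
  by (rule bdd_aboveI[where M=1]) (use bnds in auto)

lemma bddB: "A \<in> F \<Longrightarrow> bdd_below ((\<lambda>P. P A) ` \<P>)"
  by (rule bdd_belowI[where m=0]) (use bnds in auto)

lemma V_ge: "P \<in> \<P> \<Longrightarrow> A \<in> F \<Longrightarrow> P A \<le> upper_prob \<P> A"
  unfolding upper_prob_def by (rule cSUP_upper[OF _ bddA])

lemma v_le: "P \<in> \<P> \<Longrightarrow> A \<in> F \<Longrightarrow> lower_prob \<P> A \<le> P A"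
  unfolding lower_prob_def by (rule cINF_lower[OF bddB])

lemma V_le: "(\<And>P. P \<in> \<P> \<Longrightarrow> P A \<le> c) \<Longrightarrow> upper_prob \<P> A \<le> c"
  unfolding upper_prob_def by (rule cSUP_least[OF ne]) auto

lemma v_ge: "(\<And>P. P \<in> \<P> \<Longrightarrow> c \<le> P A) \<Longrightarrow> c \<le> lower_prob \<P> A"
  unfolding lower_prob_def by (rule cINF_greatest[OF ne]) auto

lemma dual1: assumes "A \<in> F" shows "upper_prob \<P> A = 1 - lower_prob \<P> (\<Omega> - A)"
proof -
  interpret sigma_algebra \<Omega> F by (rule sa)
  have c: "\<Omega> - A \<in> F" using assms by auto
  have "upper_prob \<P> A \<le> 1 - lower_prob \<P> (\<Omega> - A)"
    by (rule V_le) (use v_le[OF _ c] bnds[OF _ assms] in force)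
  moreover have "1 - upper_prob \<P> A \<le> lower_prob \<P> (\<Omega> - A)"
    by (rule v_ge) (use V_ge[OF _ assms] bnds[OF _ assms] in force)
  ultimately show ?thesis by linarith
qed

lemma dual2: assumes "A \<in> F" shows "lower_prob \<P> A = 1 - upper_prob \<P> (\<Omega> - A)"
proof -
  interpret sigma_algebra \<Omega> F by (rule sa)
  have c: "\<Omega> - A \<in> F" using assms by auto
  have "\<Omega> - (\<Omega> - A) = A" using assms sets_into_space by blast
  then show ?thesis using dual1[OF c] by simp
qed

lemma V_empty: "upper_prob \<P> {} = 0"
proof -
  interpret sigma_algebra \<Omega> F by (rule sa)
  have z: "\<And>P. P \<in> \<P> \<Longrightarrow> P {} = 0" using fa_empty[OF sa fa_of] .
  have "upper_prob \<P> {} \<le> 0" by (rule V_le) (simp add: z)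
  moreover obtain P where "P \<in> \<P>" using ne by blast
  ultimately show ?thesis using V_ge[of P "{}"] z by force
qed

lemma v_Omega: "lower_prob \<P> \<Omega> = 1"
proof -
  interpret sigma_algebra \<Omega> F by (rule sa)
  show ?thesis using dual2[OF top] V_empty by simp
qed

lemma V_split: assumes "A \<in> F" "B \<in> F" "A \<subseteq> B"
  shows "upper_prob \<P> A \<le> upper_prob \<P> B \<and> upper_prob \<P> B \<le> upper_prob \<P> A + upper_prob \<P> (B - A)"
proof -
  interpret sigma_algebra \<Omega> F by (rule sa)
  have c: "B - A \<in> F" using assms by auto
  have eq: "P B = P A + P (B - A)" if "P \<in> \<P>" for P using fa_diff[OF sa fa_of[OF that] assms] .
  have "upper_prob \<P> A \<le> upper_prob \<P> B"
    by (rule V_le) (use eq bnds[OF _ c] V_ge[OF _ assms(2)] in force)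
  moreover have "upper_prob \<P> B \<le> upper_prob \<P> A + upper_prob \<P> (B - A)"
    by (rule V_le) (use eq V_ge[OF _ c] V_ge[OF _ assms(1)] in force)
  ultimately show ?thesis by blast
qed

lemma i_ii: assumes "continuous_at_empty F (upper_prob \<P>)" shows "set_fun_continuous F (upper_prob \<P>)"
proof -
  interpret sigma_algebra \<Omega> F by (rule sa)
  let ?V = "upper_prob \<P>"
  have inc: "(\<lambda>n. ?V (B n)) \<longlonglongrightarrow> ?V A"
    if h: "range B \<subseteq> F" "A \<in> F" "incseq B" "(\<Union>n. B n) = A" for A B
  proof -
    have r: "range (\<lambda>n. A - B n) \<subseteq> F" using h by auto
    have d: "decseq (\<lambda>n. A - B n)" using h(3) unfolding incseq_def decseq_def by blast
    have e: "(\<Inter>n. A - B n) = {}" using h(4) by blast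
    have l: "(\<lambda>n. ?V (A - B n)) \<longlonglongrightarrow> 0" using assms r d e unfolding continuous_at_empty_def by blast
    have bn: "\<And>n. B n \<in> F" "\<And>n. B n \<subseteq> A" using h by auto
    have sp: "?V (B n) \<le> ?V A" "?V A \<le> ?V (B n) + ?V (A - B n)" for n
      using V_split[OF bn(1) h(2) bn(2)] by auto
    have s: "\<And>n. ?V A - ?V (A - B n) \<le> ?V (B n) \<and> ?V (B n) \<le> ?V A"
      using sp by (meson diff_le_eq add.commute)
    show ?thesis
      by (rule tendsto_sandwich[of "\<lambda>n. ?V A - ?V (A - B n)" _ _ "\<lambda>n. ?V A"])
         (use s tendsto_diff[OF tendsto_const l] in auto)
  qed
  have dec: "(\<lambda>n. ?V (B n)) \<longlonglongrightarrow> ?V A"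
    if h: "range B \<subseteq> F" "A \<in> F" "decseq B" "(\<Inter>n. B n) = A" for A B
  proof -
    have r: "range (\<lambda>n. B n - A) \<subseteq> F" using h by auto
    have d: "decseq (\<lambda>n. B n - A)" using h(3) unfolding decseq_def by blast
    have e: "(\<Inter>n. B n - A) = {}" using h(4) by blast
    have l: "(\<lambda>n. ?V (B n - A)) \<longlonglongrightarrow> 0" using assms r d e unfolding continuous_at_empty_def by blast
    have bn: "\<And>n. B n \<in> F" "\<And>n. A \<subseteq> B n" using h by auto
    have s: "\<And>n. ?V A \<le> ?V (B n) \<and> ?V (B n) \<le> ?V A + ?V (B n - A)"
      using V_split[OF h(2) bn(1) bn(2)] by auto
    show ?thesis
      by (rule tendsto_sandwich[of "\<lambda>n. ?V A" _ _ "\<lambda>n. ?V A + ?V (B n - A)"])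
         (use s tendsto_add[OF tendsto_const l] in auto)
  qed
  show ?thesis unfolding set_fun_continuous_def using inc dec by blast
qed

lemma ii_i: assumes "set_fun_continuous F (upper_prob \<P>)" shows "continuous_at_empty F (upper_prob \<P>)"
proof -
  interpret sigma_algebra \<Omega> F by (rule sa)
  show ?thesis using assms V_empty unfolding set_fun_continuous_def continuous_at_empty_def
    by (metis empty_sets)
qed

lemma ii_iii: assumes "set_fun_continuous F (upper_prob \<P>)" shows "set_fun_continuous F (lower_prob \<P>)"
proof -
  interpret sigma_algebra \<Omega> F by (rule sa)
  let ?V = "upper_prob \<P>" and ?v = "lower_prob \<P>"
  have inc: "(\<lambda>n. ?v (B n)) \<longlonglongrightarrow> ?v A"
    if h: "range B \<subseteq> F" "A \<in> F" "incseq B" "(\<Union>n. B n) = A" for A B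
  proof -
    have r: "range (\<lambda>n. \<Omega> - B n) \<subseteq> F" using h by auto
    have d: "decseq (\<lambda>n. \<Omega> - B n)" using h(3) unfolding incseq_def decseq_def by blast
    have e: "(\<Inter>n. \<Omega> - B n) = \<Omega> - A" using h(4) by blast
    have c: "\<Omega> - A \<in> F" using h by auto
    have l: "(\<lambda>n. ?V (\<Omega> - B n)) \<longlonglongrightarrow> ?V (\<Omega> - A)"
      using assms r d e c unfolding set_fun_continuous_def by blast
    have "(\<lambda>n. 1 - ?V (\<Omega> - B n)) \<longlonglongrightarrow> 1 - ?V (\<Omega> - A)" by (rule tendsto_diff[OF tendsto_const l])
    moreover have "\<And>n. ?v (B n) = 1 - ?V (\<Omega> - B n)" using dual2 h(1) by auto
    ultimately show ?thesis using dual2[OF h(2)] by simp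
  qed
  have dec: "(\<lambda>n. ?v (B n)) \<longlonglongrightarrow> ?v A"
    if h: "range B \<subseteq> F" "A \<in> F" "decseq B" "(\<Inter>n. B n) = A" for A B
  proof -
    have r: "range (\<lambda>n. \<Omega> - B n) \<subseteq> F" using h by auto
    have d: "incseq (\<lambda>n. \<Omega> - B n)" using h(3) unfolding incseq_def decseq_def by blast
    have e: "(\<Union>n. \<Omega> - B n) = \<Omega> - A" using h(4) by blast
    have c: "\<Omega> - A \<in> F" using h by auto
    have l: "(\<lambda>n. ?V (\<Omega> - B n)) \<longlonglongrightarrow> ?V (\<Omega> - A)"
      using assms r d e c unfolding set_fun_continuous_def by blast
    have "(\<lambda>n. 1 - ?V (\<Omega> - B n)) \<longlonglongrightarrow> 1 - ?V (\<Omega> - A)" by (rule tendsto_diff[OF tendsto_const l])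
    moreover have "\<And>n. ?v (B n) = 1 - ?V (\<Omega> - B n)" using dual2 h(1) by auto
    ultimately show ?thesis using dual2[OF h(2)] by simp
  qed
  show ?thesis unfolding set_fun_continuous_def using inc dec by blast
qed

lemma iii_iv: assumes "set_fun_continuous F (lower_prob \<P>)" shows "continuous_at_Omega \<Omega> F (lower_prob \<P>)"
proof -
  interpret sigma_algebra \<Omega> F by (rule sa)
  show ?thesis using assms v_Omega unfolding set_fun_continuous_def continuous_at_Omega_def
    by (metis top)
qed

lemma iv_i: assumes "continuous_at_Omega \<Omega> F (lower_prob \<P>)" shows "continuous_at_empty F (upper_prob \<P>)"
  unfolding continuous_at_empty_def
proof (intro allI impI)
  interpret sigma_algebra \<Omega> F by (rule sa)
  let ?V = "upper_prob \<P>" and ?v = "lower_prob \<P>"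
  fix B :: "nat \<Rightarrow> 'a set"
  assume h: "range B \<subseteq> F" "decseq B" "(\<Inter>n. B n) = {}"
  have r: "range (\<lambda>n. \<Omega> - B n) \<subseteq> F" using h by auto
  have d: "incseq (\<lambda>n. \<Omega> - B n)" using h(2) unfolding incseq_def decseq_def by blast
  have e: "(\<Union>n. \<Omega> - B n) = \<Omega>" using h(3) by blast
  have l: "(\<lambda>n. ?v (\<Omega> - B n)) \<longlonglongrightarrow> 1"
    using assms r d e unfolding continuous_at_Omega_def by blast
  have "(\<lambda>n. 1 - ?v (\<Omega> - B n)) \<longlonglongrightarrow> 1 - 1" by (rule tendsto_diff[OF tendsto_const l])
  moreover have "\<And>n. ?V (B n) = 1 - ?v (\<Omega> - B n)" using dual1 h(1) by auto
  ultimately show "(\<lambda>n. ?V (B n)) \<longlonglongrightarrow> 0" by simp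
qed

lemma i_v: assumes "continuous_at_empty F (upper_prob \<P>)" shows "core \<Omega> F (lower_prob \<P>) \<subseteq> Delta_sigma \<Omega> F"
proof
  interpret sigma_algebra \<Omega> F by (rule sa)
  let ?V = "upper_prob \<P>" and ?v = "lower_prob \<P>"
  fix Q assume "Q \<in> core \<Omega> F ?v"
  hence fq: "fa_prob \<Omega> F Q" and ge: "\<And>A. A \<in> F \<Longrightarrow> ?v A \<le> Q A"
    unfolding core_def Delta_def by auto
  have QV: "Q A \<le> ?V A" if "A \<in> F" for A
  proof -
    have c: "\<Omega> - A \<in> F" using that by auto
    show ?thesis using ge[OF c] fa_bounds[OF sa fq that] dual1[OF that] by linarith
  qed
  have ca: "(\<lambda>n. Q (A n)) sums Q (\<Union>n. A n)"
    if h: "range A \<subseteq> F" "disjoint_family A" "(\<Union>n. A n) \<in> F" for A :: "nat \<Rightarrow> 'a set"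
  proof -
    let ?U = "\<Union>n. A n"
    let ?C = "\<lambda>n. ?U - (\<Union>i<n. A i)"
    have fu: "\<And>n. (\<Union>i<n. A i) \<in> F" using h(1) by auto
    have r: "range ?C \<subseteq> F" using fu h(3) by auto
    have d: "decseq ?C" unfolding decseq_def by auto
    have e: "(\<Inter>n. ?C n) = {}"
    proof -
      have "x \<notin> ?C (Suc n)" if "x \<in> A n" for x n using that by auto
      thus ?thesis by blast
    qed
    have l: "(\<lambda>n. ?V (?C n)) \<longlonglongrightarrow> 0" using assms r d e unfolding continuous_at_empty_def by blast
    have cf: "\<And>n. ?C n \<in> F" using r by blast
    have lq: "(\<lambda>n. Q (?C n)) \<longlonglongrightarrow> 0"
    proof (rule tendsto_sandwich[of "\<lambda>n. 0" _ _ "\<lambda>n. ?V (?C n)"])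
      show "\<forall>\<^sub>F n in sequentially. 0 \<le> Q (?C n)"
        by (intro always_eventually allI) (use fa_bounds[OF sa fq cf] in auto)
      show "\<forall>\<^sub>F n in sequentially. Q (?C n) \<le> ?V (?C n)"
        by (intro always_eventually allI) (use QV[OF cf] in auto)
    qed (use l in auto)
    have eq: "(\<Sum>i<n. Q (A i)) = Q ?U - Q (?C n)" for n
    proof -
      have "Q ?U = Q (\<Union>i<n. A i) + Q (?C n)" by (rule fa_diff[OF sa fq fu h(3)]) auto
      thus ?thesis using fa_finite_union[OF sa fq h(1,2)] by simp
    qed
    have "(\<lambda>n. Q ?U - Q (?C n)) \<longlonglongrightarrow> Q ?U - 0" by (rule tendsto_diff[OF tendsto_const lq])
    thus ?thesis unfolding sums_def using eq by simp
  qed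
  show "Q \<in> Delta_sigma \<Omega> F" unfolding Delta_sigma_def using fq ca by blast
qed

end

theorem proposition2:
  fixes \<Omega> :: "'a set" and F :: "'a set set" and \<P> :: "('a set \<Rightarrow> real) set"
  assumes "sigma_algebra \<Omega> F"
    and "\<P> \<noteq> {}" and "\<P> \<subseteq> Delta \<Omega> F"
  shows "(continuous_at_empty F (upper_prob \<P>) \<longleftrightarrow> set_fun_continuous F (upper_prob \<P>))
       \<and> (set_fun_continuous F (upper_prob \<P>) \<longleftrightarrow> set_fun_continuous F (lower_prob \<P>))
       \<and> (set_fun_continuous F (lower_prob \<P>) \<longleftrightarrow> continuous_at_Omega \<Omega> F (lower_prob \<P>))
       \<and> (continuous_at_empty F (upper_prob \<P>) \<longrightarrow> core \<Omega> F (lower_prob \<P>) \<subseteq> Delta_sigma \<Omega> F)"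
  using i_ii[OF assms] ii_i[OF assms] ii_iii[OF assms] iii_iv[OF assms] iv_i[OF assms] i_v[OF assms]
  by blast

end
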